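(* Let $E=E(R/\mathfrak m)$ and $N^\circ=\mathrm{Hom}_R(N,E)$ for an $R$-module $N$. Then: (a) if $N^\circ$ is strongly prime, then $N$ is strongly coprime; (b) if $N^\circ$ is strongly coprime, then $N$ is strongly prime; (c) if $N$ is reflexive (the canonical map $N\to N^{\circ\circ}$ is an isomorphism), the converses of (a) and (b) hold as well.
   Context: $R$ is a commutative Noetherian local ring with maximal ideal $\mathfrak m$, $E(R/\mathfrak m)$ the injective hull of $R/\mathfrak m$. A module $M\ne0$ is strongly prime if every nonzero $R$-endomorphism of $M$ is injective; a module $N\neq0$ is strongly coprime if every nonzero $R$-endomorphism of $N$ is surjective. *)

theory Defs
  imports "HOL-Algebra.Module" "HOL-Algebra.Ring_Divisibility"
begin

definition noeth_local_ring :: "'r ring \<Rightarrow> 'r set \<Rightarrow> bool" where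
  "noeth_local_ring R m \<longleftrightarrow> cring R \<and> noetherian_ring R \<and> maximalideal m R \<and>
     (\<forall>I. maximalideal I R \<longrightarrow> I = m)"

definition lin_map :: "'r ring \<Rightarrow> ('r, 'a) module \<Rightarrow> ('r, 'b) module \<Rightarrow> ('a \<Rightarrow> 'b) \<Rightarrow> bool" where
  "lin_map R M N f \<longleftrightarrow> f \<in> carrier M \<rightarrow> carrier N \<and>
     (\<forall>x\<in>carrier M. \<forall>y\<in>carrier M. f (x \<oplus>\<^bsub>M\<^esub> y) = f x \<oplus>\<^bsub>N\<^esub> f y) \<and>
     (\<forall>r\<in>carrier R. \<forall>x\<in>carrier M. f (r \<odot>\<^bsub>M\<^esub> x) = r \<odot>\<^bsub>N\<^esub> f x)"

definition Hom_mod :: "'r ring \<Rightarrow> ('r, 'a) module \<Rightarrow> ('r, 'b) module \<Rightarrow> ('r, 'a \<Rightarrow> 'b) module" where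
  "Hom_mod R M N = \<lparr>carrier = {f. lin_map R M N f \<and> f \<in> extensional (carrier M)},
     mult = (\<lambda>f g. undefined), one = undefined,
     zero = (\<lambda>x\<in>carrier M. \<zero>\<^bsub>N\<^esub>),
     add = (\<lambda>f g. \<lambda>x\<in>carrier M. f x \<oplus>\<^bsub>N\<^esub> g x),
     smult = (\<lambda>r f. \<lambda>x\<in>carrier M. r \<odot>\<^bsub>N\<^esub> f x)\<rparr>"

definition strongly_prime :: "'r ring \<Rightarrow> ('r, 'a) module \<Rightarrow> bool" where
  "strongly_prime R M \<longleftrightarrow> carrier M \<noteq> {\<zero>\<^bsub>M\<^esub>} \<and>
     (\<forall>f. lin_map R M M f \<and> (\<exists>x\<in>carrier M. f x \<noteq> \<zero>\<^bsub>M\<^esub>) \<longrightarrow> inj_on f (carrier M))"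

definition strongly_coprime :: "'r ring \<Rightarrow> ('r, 'a) module \<Rightarrow> bool" where
  "strongly_coprime R M \<longleftrightarrow> carrier M \<noteq> {\<zero>\<^bsub>M\<^esub>} \<and>
     (\<forall>f. lin_map R M M f \<and> (\<exists>x\<in>carrier M. f x \<noteq> \<zero>\<^bsub>M\<^esub>) \<longrightarrow> f ` carrier M = carrier M)"

text \<open>Injectivity of E, tested against all modules whose carrier lives in type 'c.\<close>
definition injective_wrt :: "'c itself \<Rightarrow> 'r ring \<Rightarrow> ('r, 'e) module \<Rightarrow> bool" where
  "injective_wrt (TYPE('c)) R E \<longleftrightarrow>
     (\<forall>(B :: ('r, 'c) module) A h. module R B \<and> submodule A R B \<and> lin_map R (B\<lparr>carrier := A\<rparr>) E h
        \<longrightarrow> (\<exists>g. lin_map R B E g \<and> (\<forall>x\<in>A. g x = h x)))"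

text \<open>E contains an essential submodule R e isomorphic to R/m (i.e. ann(e) = m).\<close>
definition essential_ext_of_residue :: "'r ring \<Rightarrow> 'r set \<Rightarrow> ('r, 'e) module \<Rightarrow> bool" where
  "essential_ext_of_residue R m E \<longleftrightarrow> module R E \<and>
     (\<exists>e\<in>carrier E. {r \<in> carrier R. r \<odot>\<^bsub>E\<^esub> e = \<zero>\<^bsub>E\<^esub>} = m \<and>
        (\<forall>U. submodule U R E \<and> U \<noteq> {\<zero>\<^bsub>E\<^esub>} \<longrightarrow>
           (\<exists>u\<in>U. u \<noteq> \<zero>\<^bsub>E\<^esub> \<and> (\<exists>r\<in>carrier R. u = r \<odot>\<^bsub>E\<^esub> e))))"

definition eval_map :: "'r ring \<Rightarrow> ('r, 'e) module \<Rightarrow> ('r, 'n) module \<Rightarrow> 'n \<Rightarrow> ('n \<Rightarrow> 'e) \<Rightarrow> 'e" where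
  "eval_map R E N x = (\<lambda>g\<in>carrier (Hom_mod R N E). g x)"

definition reflexive_wrt :: "'r ring \<Rightarrow> ('r, 'e) module \<Rightarrow> ('r, 'n) module \<Rightarrow> bool" where
  "reflexive_wrt R E N \<longleftrightarrow>
     lin_map R N (Hom_mod R (Hom_mod R N E) E) (eval_map R E N) \<and>
     bij_betw (eval_map R E N) (carrier N) (carrier (Hom_mod R (Hom_mod R N E) E))"

end

theory Submission
  imports Defs
begin


lemma ideal_le_max:
  assumes R: "cring R" and I: "ideal I R" and one: "\<one>\<^bsub>R\<^esub> \<notin> I"
    and uniq: "\<forall>J. maximalideal J R \<longrightarrow> J = m"
  shows "I \<subseteq> m"
proof -
  interpret cring R by fact
  define A where "A = {J. ideal J R \<and> I \<subseteq> J \<and> \<one>\<^bsub>R\<^esub> \<notin> J}"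
  have "\<exists>M\<in>A. \<forall>X\<in>A. M \<subseteq> X \<longrightarrow> X = M"
  proof (rule subset_Zorn_nonempty)
    show "A \<noteq> {}" using I one A_def by auto
    fix C assume C: "C \<noteq> {}" "subset.chain A C"
    have "subset.chain {J. ideal J R} C" using C(2) unfolding A_def pred_on.chain_def by auto
    from chain_Union_is_ideal[OF this] C(1) have "ideal (\<Union>C) R" by simp
    moreover have "I \<subseteq> \<Union>C" using C unfolding A_def pred_on.chain_def by blast
    moreover have "\<one>\<^bsub>R\<^esub> \<notin> \<Union>C" using C unfolding A_def pred_on.chain_def by auto
    ultimately show "\<Union>C \<in> A" unfolding A_def by auto
  qed
  then obtain M where M: "M \<in> A" "\<And>X. X \<in> A \<Longrightarrow> M \<subseteq> X \<Longrightarrow> X = M" by blast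
  have "maximalideal M R"
  proof (rule maximalidealI)
    show "ideal M R" using M A_def by auto
    show "carrier R \<noteq> M" using M A_def by auto
    fix J assume J: "ideal J R" "M \<subseteq> J" "J \<subseteq> carrier R"
    show "J = M \<or> J = carrier R"
    proof (cases "\<one>\<^bsub>R\<^esub> \<in> J")
      case True then show ?thesis using ideal.one_imp_carrier[OF J(1)] by auto
    next
      case False then have "J \<in> A" using J M A_def by auto
      then show ?thesis using M J by auto
    qed
  qed
  then have "M = m" using uniq by auto
  then show ?thesis using M A_def by auto
qed


lemma lin_zero:
  assumes "module R M" "module R N" "lin_map R M N f"
  shows "f \<zero>\<^bsub>M\<^esub> = \<zero>\<^bsub>N\<^esub>"
proof -
  interpret M: module R M by fact
  interpret N: module R N by fact
  have f0: "f \<zero>\<^bsub>M\<^esub> \<in> carrier N" using assms(3) unfolding lin_map_def by auto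
  have "f \<zero>\<^bsub>M\<^esub> = f (\<zero>\<^bsub>M\<^esub> \<oplus>\<^bsub>M\<^esub> \<zero>\<^bsub>M\<^esub>)" by simp
  also have "\<dots> = f \<zero>\<^bsub>M\<^esub> \<oplus>\<^bsub>N\<^esub> f \<zero>\<^bsub>M\<^esub>" using assms(3) M.zero_closed unfolding lin_map_def by blast
  finally show ?thesis using f0 by (metis N.l_zero N.add.right_cancel N.zero_closed)
qed

lemma separate:
  fixes R :: "'r ring" and E :: "('r, 'e) module" and M :: "('r, 'c) module"
  assumes nl: "noeth_local_ring R m" and ess: "essential_ext_of_residue R m E"
    and inj: "injective_wrt TYPE('c) R E" and Mm: "module R M"
    and S: "submodule S R M" and y: "y \<in> carrier M" "y \<notin> S"
  shows "\<exists>g. lin_map R M E g \<and> (\<forall>x\<in>S. g x = \<zero>\<^bsub>E\<^esub>) \<and> g y \<noteq> \<zero>\<^bsub>E\<^esub>"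
proof -
  interpret M: module R M by fact
  interpret E: module R E using ess unfolding essential_ext_of_residue_def by auto
  have Ssub: "S \<subseteq> carrier M" using M.submoduleE(1)[OF S] .
  have S0: "\<zero>\<^bsub>M\<^esub> \<in> S" using S by (simp add: submodule_def subgroup.one_closed[of S "add_monoid M", simplified])
  have Sadd: "\<And>a b. a \<in> S \<Longrightarrow> b \<in> S \<Longrightarrow> a \<oplus>\<^bsub>M\<^esub> b \<in> S" using M.submoduleE(5)[OF S] .
  have Sneg: "\<And>a. a \<in> S \<Longrightarrow> \<ominus>\<^bsub>M\<^esub> a \<in> S" using M.submoduleE(3)[OF S] .
  have Ssm: "\<And>a b. a \<in> carrier R \<Longrightarrow> b \<in> S \<Longrightarrow> a \<odot>\<^bsub>M\<^esub> b \<in> S" using M.submoduleE(4)[OF S] .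
  obtain e where e: "e \<in> carrier E" "{r \<in> carrier R. r \<odot>\<^bsub>E\<^esub> e = \<zero>\<^bsub>E\<^esub>} = m"
    using ess unfolding essential_ext_of_residue_def by auto
  have mmax: "maximalideal m R" and uniq: "\<forall>J. maximalideal J R \<longrightarrow> J = m"
    using nl unfolding noeth_local_ring_def by auto
  have one_m: "\<one>\<^bsub>R\<^esub> \<notin> m"
    using mmax ideal.one_imp_carrier maximalideal.I_notcarr maximalideal.axioms(1) by metis
  define I where "I = {r \<in> carrier R. r \<odot>\<^bsub>M\<^esub> y \<in> S}"
  have "ideal I R"
  proof (rule idealI)
    show "ring R" by unfold_locales
    show "subgroup I (add_monoid R)"
    proof (rule M.R.add.subgroupI)
      show "I \<subseteq> carrier R" unfolding I_def by auto
      show "I \<noteq> {}" using S0 y unfolding I_def by (auto intro!: exI[of _ "\<zero>\<^bsub>R\<^esub>"])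
    next
      fix a assume a: "a \<in> I"
      then show "\<ominus>\<^bsub>R\<^esub> a \<in> I" unfolding I_def
        using M.smult_l_minus[of a y] Sneg y by auto
    next
      fix a b assume "a \<in> I" "b \<in> I"
      then show "a \<oplus>\<^bsub>R\<^esub> b \<in> I" unfolding I_def
        using M.smult_l_distr[of a b y] Sadd y by auto
    qed
  next
    fix a x assume "a \<in> I" "x \<in> carrier R"
    then have a: "a \<in> carrier R" "a \<odot>\<^bsub>M\<^esub> y \<in> S" and x: "x \<in> carrier R" unfolding I_def by auto
    have "(x \<otimes>\<^bsub>R\<^esub> a) \<odot>\<^bsub>M\<^esub> y \<in> S"
      using M.smult_assoc1[of x a y] Ssm[of x "a \<odot>\<^bsub>M\<^esub> y"] a x y by metis
    then show "x \<otimes>\<^bsub>R\<^esub> a \<in> I" "a \<otimes>\<^bsub>R\<^esub> x \<in> I" unfolding I_def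
      using M.R.m_comm[of a x] a x by auto
  qed
  moreover have "\<one>\<^bsub>R\<^esub> \<notin> I" using y unfolding I_def by auto
  ultimately have Im: "I \<subseteq> m" using ideal_le_max[OF M.is_cring _ _ uniq] by blast
  have wd: "r \<odot>\<^bsub>E\<^esub> e = s \<odot>\<^bsub>E\<^esub> e"
    if "z \<in> S" "z' \<in> S" "r \<in> carrier R" "s \<in> carrier R"
       "z \<oplus>\<^bsub>M\<^esub> r \<odot>\<^bsub>M\<^esub> y = z' \<oplus>\<^bsub>M\<^esub> s \<odot>\<^bsub>M\<^esub> y" for z z' r s
  proof -
    have zc: "z \<in> carrier M" "z' \<in> carrier M" using that Ssub by auto
    have ry: "r \<odot>\<^bsub>M\<^esub> y = \<ominus>\<^bsub>M\<^esub> z \<oplus>\<^bsub>M\<^esub> (z' \<oplus>\<^bsub>M\<^esub> s \<odot>\<^bsub>M\<^esub> y)"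
      using M.add.inv_solve_left[of "r \<odot>\<^bsub>M\<^esub> y" z "z' \<oplus>\<^bsub>M\<^esub> s \<odot>\<^bsub>M\<^esub> y"] that zc y by auto
    have "(r \<ominus>\<^bsub>R\<^esub> s) \<odot>\<^bsub>M\<^esub> y = r \<odot>\<^bsub>M\<^esub> y \<oplus>\<^bsub>M\<^esub> \<ominus>\<^bsub>M\<^esub> (s \<odot>\<^bsub>M\<^esub> y)"
      using that y by (simp add: a_minus_def M.smult_l_distr M.smult_l_minus)
    also have "\<dots> = \<ominus>\<^bsub>M\<^esub> z \<oplus>\<^bsub>M\<^esub> z'"
      unfolding ry using that y zc by (simp add: M.a_assoc M.r_neg)
    finally have "r \<ominus>\<^bsub>R\<^esub> s \<in> I" unfolding I_def using that Sadd Sneg by auto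
    then have "(r \<ominus>\<^bsub>R\<^esub> s) \<odot>\<^bsub>E\<^esub> e = \<zero>\<^bsub>E\<^esub>" using Im e by auto
    then have "r \<odot>\<^bsub>E\<^esub> e \<ominus>\<^bsub>E\<^esub> s \<odot>\<^bsub>E\<^esub> e = \<zero>\<^bsub>E\<^esub>"
      using that e by (simp add: a_minus_def E.smult_l_distr E.smult_l_minus)
    then show ?thesis using E.minus_equality[of "r \<odot>\<^bsub>E\<^esub> e" "\<ominus>\<^bsub>E\<^esub> (s \<odot>\<^bsub>E\<^esub> e)"]
        E.minus_minus[of "s \<odot>\<^bsub>E\<^esub> e"] that e by (auto simp: a_minus_def)
  qed
  define T where "T = {w. \<exists>z\<in>S. \<exists>r\<in>carrier R. w = z \<oplus>\<^bsub>M\<^esub> r \<odot>\<^bsub>M\<^esub> y}"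
  define h where "h w = (SOME v. \<exists>z\<in>S. \<exists>r\<in>carrier R. w = z \<oplus>\<^bsub>M\<^esub> r \<odot>\<^bsub>M\<^esub> y \<and> v = r \<odot>\<^bsub>E\<^esub> e)" for w
  have hv: "h (z \<oplus>\<^bsub>M\<^esub> r \<odot>\<^bsub>M\<^esub> y) = r \<odot>\<^bsub>E\<^esub> e" if "z \<in> S" "r \<in> carrier R" for z r
  proof -
    have "\<exists>z'\<in>S. \<exists>r'\<in>carrier R. z \<oplus>\<^bsub>M\<^esub> r \<odot>\<^bsub>M\<^esub> y = z' \<oplus>\<^bsub>M\<^esub> r' \<odot>\<^bsub>M\<^esub> y \<and> h (z \<oplus>\<^bsub>M\<^esub> r \<odot>\<^bsub>M\<^esub> y) = r' \<odot>\<^bsub>E\<^esub> e"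
      unfolding h_def by (rule someI_ex) (use that in blast)
    then obtain z' r' where "z' \<in> S" "r' \<in> carrier R" "z \<oplus>\<^bsub>M\<^esub> r \<odot>\<^bsub>M\<^esub> y = z' \<oplus>\<^bsub>M\<^esub> r' \<odot>\<^bsub>M\<^esub> y"
       "h (z \<oplus>\<^bsub>M\<^esub> r \<odot>\<^bsub>M\<^esub> y) = r' \<odot>\<^bsub>E\<^esub> e" by blast
    then show ?thesis using wd[of z z' r r'] that by auto
  qed
  have TM: "T \<subseteq> carrier M" unfolding T_def using Ssub y by auto
  have Tsub: "submodule T R M"
  proof (rule M.submoduleI)
    show "T \<subseteq> carrier M" by (rule TM)
    show "\<zero>\<^bsub>M\<^esub> \<in> T" unfolding T_def using S0 y
      by (auto intro!: bexI[of _ "\<zero>\<^bsub>M\<^esub>"] bexI[of _ "\<zero>\<^bsub>R\<^esub>"])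
  next
    fix a assume "a \<in> T"
    then obtain z r where zr: "z \<in> S" "r \<in> carrier R" "a = z \<oplus>\<^bsub>M\<^esub> r \<odot>\<^bsub>M\<^esub> y" unfolding T_def by auto
    have "\<ominus>\<^bsub>M\<^esub> a = \<ominus>\<^bsub>M\<^esub> z \<oplus>\<^bsub>M\<^esub> (\<ominus>\<^bsub>R\<^esub> r) \<odot>\<^bsub>M\<^esub> y"
      using zr Ssub y M.minus_add[of z "r \<odot>\<^bsub>M\<^esub> y"] by (auto simp: M.smult_l_minus)
    then show "\<ominus>\<^bsub>M\<^esub> a \<in> T" unfolding T_def using zr Sneg by blast
  next
    fix a b assume "a \<in> T" "b \<in> T"
    then obtain z r z' r' where zr: "z \<in> S" "r \<in> carrier R" "a = z \<oplus>\<^bsub>M\<^esub> r \<odot>\<^bsub>M\<^esub> y"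
      "z' \<in> S" "r' \<in> carrier R" "b = z' \<oplus>\<^bsub>M\<^esub> r' \<odot>\<^bsub>M\<^esub> y" unfolding T_def by auto
    have "a \<oplus>\<^bsub>M\<^esub> b = (z \<oplus>\<^bsub>M\<^esub> z') \<oplus>\<^bsub>M\<^esub> (r \<oplus>\<^bsub>R\<^esub> r') \<odot>\<^bsub>M\<^esub> y"
      using zr y subsetD[OF Ssub zr(1)] subsetD[OF Ssub zr(4)] by (simp add: M.smult_l_distr M.a_ac)
    then show "a \<oplus>\<^bsub>M\<^esub> b \<in> T" unfolding T_def using zr Sadd by blast
  next
    fix a x assume "a \<in> carrier R" "x \<in> T"
    then obtain z r where zr: "z \<in> S" "r \<in> carrier R" "x = z \<oplus>\<^bsub>M\<^esub> r \<odot>\<^bsub>M\<^esub> y" unfolding T_def by auto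
    have "a \<odot>\<^bsub>M\<^esub> x = a \<odot>\<^bsub>M\<^esub> z \<oplus>\<^bsub>M\<^esub> (a \<otimes>\<^bsub>R\<^esub> r) \<odot>\<^bsub>M\<^esub> y"
      using zr y subsetD[OF Ssub zr(1)] \<open>a \<in> carrier R\<close> by (simp add: M.smult_r_distr M.smult_assoc1)
    then show "a \<odot>\<^bsub>M\<^esub> x \<in> T" unfolding T_def using zr Ssm \<open>a \<in> carrier R\<close> by blast
  qed
  have hlin: "lin_map R (M\<lparr>carrier := T\<rparr>) E h"
    unfolding lin_map_def
  proof (intro conjI ballI)
    show "h \<in> carrier (M\<lparr>carrier := T\<rparr>) \<rightarrow> carrier E"
      using hv e unfolding T_def by auto
  next
    fix a b assume "a \<in> carrier (M\<lparr>carrier := T\<rparr>)" "b \<in> carrier (M\<lparr>carrier := T\<rparr>)"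
    then obtain z r z' r' where zr: "z \<in> S" "r \<in> carrier R" "a = z \<oplus>\<^bsub>M\<^esub> r \<odot>\<^bsub>M\<^esub> y"
      "z' \<in> S" "r' \<in> carrier R" "b = z' \<oplus>\<^bsub>M\<^esub> r' \<odot>\<^bsub>M\<^esub> y" unfolding T_def by auto
    have "a \<oplus>\<^bsub>M\<^esub> b = (z \<oplus>\<^bsub>M\<^esub> z') \<oplus>\<^bsub>M\<^esub> (r \<oplus>\<^bsub>R\<^esub> r') \<odot>\<^bsub>M\<^esub> y"
      using zr y subsetD[OF Ssub zr(1)] subsetD[OF Ssub zr(4)] by (simp add: M.smult_l_distr M.a_ac)
    then have "h (a \<oplus>\<^bsub>M\<^esub> b) = (r \<oplus>\<^bsub>R\<^esub> r') \<odot>\<^bsub>E\<^esub> e" using hv zr Sadd by simp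
    then show "h (a \<oplus>\<^bsub>M\<lparr>carrier := T\<rparr>\<^esub> b) = h a \<oplus>\<^bsub>E\<^esub> h b"
      using hv zr e by (simp add: E.smult_l_distr)
  next
    fix a x assume "a \<in> carrier R" "x \<in> carrier (M\<lparr>carrier := T\<rparr>)"
    then obtain z r where zr: "z \<in> S" "r \<in> carrier R" "x = z \<oplus>\<^bsub>M\<^esub> r \<odot>\<^bsub>M\<^esub> y" unfolding T_def by auto
    have "a \<odot>\<^bsub>M\<^esub> x = a \<odot>\<^bsub>M\<^esub> z \<oplus>\<^bsub>M\<^esub> (a \<otimes>\<^bsub>R\<^esub> r) \<odot>\<^bsub>M\<^esub> y"
      using zr y subsetD[OF Ssub zr(1)] \<open>a \<in> carrier R\<close> by (simp add: M.smult_r_distr M.smult_assoc1)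
    then have "h (a \<odot>\<^bsub>M\<^esub> x) = (a \<otimes>\<^bsub>R\<^esub> r) \<odot>\<^bsub>E\<^esub> e" using hv zr Ssm \<open>a \<in> carrier R\<close> by simp
    then show "h (a \<odot>\<^bsub>M\<lparr>carrier := T\<rparr>\<^esub> x) = a \<odot>\<^bsub>E\<^esub> h x"
      using hv zr e \<open>a \<in> carrier R\<close> by (simp add: E.smult_assoc1)
  qed
  obtain g where g: "lin_map R M E g" "\<And>x. x \<in> T \<Longrightarrow> g x = h x"
    using inj Mm Tsub hlin unfolding injective_wrt_def by blast
  have "\<forall>x\<in>S. g x = \<zero>\<^bsub>E\<^esub>"
  proof
    fix x assume x: "x \<in> S"
    have xe: "x = x \<oplus>\<^bsub>M\<^esub> \<zero>\<^bsub>R\<^esub> \<odot>\<^bsub>M\<^esub> y" using x Ssub y by auto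
    then have "x \<in> T" unfolding T_def using x by blast
    then show "g x = \<zero>\<^bsub>E\<^esub>" using g hv[of x "\<zero>\<^bsub>R\<^esub>"] x xe e by simp
  qed
  moreover have "g y \<noteq> \<zero>\<^bsub>E\<^esub>"
  proof -
    have ye: "y = \<zero>\<^bsub>M\<^esub> \<oplus>\<^bsub>M\<^esub> \<one>\<^bsub>R\<^esub> \<odot>\<^bsub>M\<^esub> y" using y by simp
    then have "y \<in> T" unfolding T_def using S0 by blast
    then have "g y = e" using g hv[of "\<zero>\<^bsub>M\<^esub>" "\<one>\<^bsub>R\<^esub>"] S0 ye e by simp
    moreover have "e \<noteq> \<zero>\<^bsub>E\<^esub>" using e one_m by auto
    ultimately show ?thesis by simp
  qed
  ultimately show ?thesis using g by blast
qed



lemma lin_closed: "lin_map R M N f \<Longrightarrow> x \<in> carrier M \<Longrightarrow> f x \<in> carrier N"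
  unfolding lin_map_def by auto
lemma lin_add: "lin_map R M N f \<Longrightarrow> x \<in> carrier M \<Longrightarrow> y \<in> carrier M \<Longrightarrow> f (x \<oplus>\<^bsub>M\<^esub> y) = f x \<oplus>\<^bsub>N\<^esub> f y"
  unfolding lin_map_def by auto
lemma lin_smult: "lin_map R M N f \<Longrightarrow> r \<in> carrier R \<Longrightarrow> x \<in> carrier M \<Longrightarrow> f (r \<odot>\<^bsub>M\<^esub> x) = r \<odot>\<^bsub>N\<^esub> f x"
  unfolding lin_map_def by auto
lemma lin_mapI:
  assumes "\<And>x. x \<in> carrier M \<Longrightarrow> f x \<in> carrier N"
    "\<And>x y. x \<in> carrier M \<Longrightarrow> y \<in> carrier M \<Longrightarrow> f (x \<oplus>\<^bsub>M\<^esub> y) = f x \<oplus>\<^bsub>N\<^esub> f y"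
    "\<And>r x. r \<in> carrier R \<Longrightarrow> x \<in> carrier M \<Longrightarrow> f (r \<odot>\<^bsub>M\<^esub> x) = r \<odot>\<^bsub>N\<^esub> f x"
  shows "lin_map R M N f"
  unfolding lin_map_def using assms by auto

lemma hom_carrier: "f \<in> carrier (Hom_mod R M N) \<longleftrightarrow> lin_map R M N f \<and> f \<in> extensional (carrier M)"
  by (simp add: Hom_mod_def)
lemma hom_zero: "\<zero>\<^bsub>Hom_mod R M N\<^esub> = (\<lambda>x\<in>carrier M. \<zero>\<^bsub>N\<^esub>)"
  by (simp add: Hom_mod_def)
lemma hom_add: "f \<oplus>\<^bsub>Hom_mod R M N\<^esub> g = (\<lambda>x\<in>carrier M. f x \<oplus>\<^bsub>N\<^esub> g x)"
  by (simp add: Hom_mod_def)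
lemma hom_smult: "r \<odot>\<^bsub>Hom_mod R M N\<^esub> f = (\<lambda>x\<in>carrier M. r \<odot>\<^bsub>N\<^esub> f x)"
  by (simp add: Hom_mod_def)

lemma hom_module:
  assumes MM: "module R M" and NN: "module R N"
  shows "module R (Hom_mod R M N)"
proof -
  interpret M: module R M by fact
  interpret N: module R N by fact
  let ?H = "Hom_mod R M N"
  note lc = lin_closed lin_add lin_smult
  have c_add: "(\<lambda>x\<in>carrier M. f x \<oplus>\<^bsub>N\<^esub> g x) \<in> carrier ?H" if "f \<in> carrier ?H" "g \<in> carrier ?H" for f g
  proof -
    have f: "lin_map R M N f" and g: "lin_map R M N g" using that unfolding hom_carrier by auto
    have "lin_map R M N (\<lambda>x\<in>carrier M. f x \<oplus>\<^bsub>N\<^esub> g x)"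
    proof (rule lin_mapI)
      fix x y assume "x \<in> carrier M" "y \<in> carrier M"
      then show "(\<lambda>x\<in>carrier M. f x \<oplus>\<^bsub>N\<^esub> g x) (x \<oplus>\<^bsub>M\<^esub> y) = (\<lambda>x\<in>carrier M. f x \<oplus>\<^bsub>N\<^esub> g x) x \<oplus>\<^bsub>N\<^esub> (\<lambda>x\<in>carrier M. f x \<oplus>\<^bsub>N\<^esub> g x) y"
        using f g by (simp add: lc N.a_ac)
    next
      fix r x assume "r \<in> carrier R" "x \<in> carrier M"
      then show "(\<lambda>x\<in>carrier M. f x \<oplus>\<^bsub>N\<^esub> g x) (r \<odot>\<^bsub>M\<^esub> x) = r \<odot>\<^bsub>N\<^esub> (\<lambda>x\<in>carrier M. f x \<oplus>\<^bsub>N\<^esub> g x) x"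
        using f g by (simp add: lc N.smult_r_distr)
    qed (use f g in \<open>simp add: lc\<close>)
    then show ?thesis by (simp add: hom_carrier)
  qed
  have c_zero: "(\<lambda>x\<in>carrier M. \<zero>\<^bsub>N\<^esub>) \<in> carrier ?H"
    unfolding hom_carrier by (auto intro!: lin_mapI)
  have c_sm: "(\<lambda>x\<in>carrier M. r \<odot>\<^bsub>N\<^esub> f x) \<in> carrier ?H" if "f \<in> carrier ?H" "r \<in> carrier R" for f r
  proof -
    have f: "lin_map R M N f" using that unfolding hom_carrier by auto
    have "lin_map R M N (\<lambda>x\<in>carrier M. r \<odot>\<^bsub>N\<^esub> f x)"
    proof (rule lin_mapI)
      fix x y assume "x \<in> carrier M" "y \<in> carrier M"
      then show "(\<lambda>x\<in>carrier M. r \<odot>\<^bsub>N\<^esub> f x) (x \<oplus>\<^bsub>M\<^esub> y) = (\<lambda>x\<in>carrier M. r \<odot>\<^bsub>N\<^esub> f x) x \<oplus>\<^bsub>N\<^esub> (\<lambda>x\<in>carrier M. r \<odot>\<^bsub>N\<^esub> f x) y"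
        using f that by (simp add: lc N.smult_r_distr)
    next
      fix s x assume "s \<in> carrier R" "x \<in> carrier M"
      then show "(\<lambda>x\<in>carrier M. r \<odot>\<^bsub>N\<^esub> f x) (s \<odot>\<^bsub>M\<^esub> x) = s \<odot>\<^bsub>N\<^esub> (\<lambda>x\<in>carrier M. r \<odot>\<^bsub>N\<^esub> f x) x"
        using f that by (simp add: lc N.smult_assoc1[symmetric] M.R.m_comm)
    qed (use f that in \<open>simp add: lc\<close>)
    then show ?thesis by (simp add: hom_carrier)
  qed
  have c_neg: "(\<lambda>x\<in>carrier M. \<ominus>\<^bsub>N\<^esub> f x) \<in> carrier ?H" if "f \<in> carrier ?H" for f
  proof -
    have f: "lin_map R M N f" using that unfolding hom_carrier by auto
    have "lin_map R M N (\<lambda>x\<in>carrier M. \<ominus>\<^bsub>N\<^esub> f x)"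
    proof (rule lin_mapI)
      fix x y assume "x \<in> carrier M" "y \<in> carrier M"
      then show "(\<lambda>x\<in>carrier M. \<ominus>\<^bsub>N\<^esub> f x) (x \<oplus>\<^bsub>M\<^esub> y) = (\<lambda>x\<in>carrier M. \<ominus>\<^bsub>N\<^esub> f x) x \<oplus>\<^bsub>N\<^esub> (\<lambda>x\<in>carrier M. \<ominus>\<^bsub>N\<^esub> f x) y"
        using f by (simp add: lc N.minus_add)
    next
      fix s x assume "s \<in> carrier R" "x \<in> carrier M"
      then show "(\<lambda>x\<in>carrier M. \<ominus>\<^bsub>N\<^esub> f x) (s \<odot>\<^bsub>M\<^esub> x) = s \<odot>\<^bsub>N\<^esub> (\<lambda>x\<in>carrier M. \<ominus>\<^bsub>N\<^esub> f x) x"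
        using f by (simp add: lc N.smult_r_minus)
    qed (use f in \<open>simp add: lc\<close>)
    then show ?thesis by (simp add: hom_carrier)
  qed
  have fc: "f x \<in> carrier N" if "f \<in> carrier ?H" "x \<in> carrier M" for f x
    using that lin_closed[of R M N f x] unfolding hom_carrier by simp
  have fe: "f = (\<lambda>x\<in>carrier M. f x)" if "f \<in> carrier ?H" for f
    using that extensional_restrict[of f "carrier M"] unfolding hom_carrier by simp
  show ?thesis
  proof (rule moduleI)
    show "cring R" by (rule M.is_cring)
    show "abelian_group ?H"
    proof (rule abelian_groupI)
      fix x y assume "x \<in> carrier ?H" "y \<in> carrier ?H"
      then show "x \<oplus>\<^bsub>?H\<^esub> y \<in> carrier ?H" using c_add by (simp add: hom_add)
    next
      show "\<zero>\<^bsub>?H\<^esub> \<in> carrier ?H" using c_zero by (simp add: hom_zero)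
    next
      fix x y z assume "x \<in> carrier ?H" "y \<in> carrier ?H" "z \<in> carrier ?H"
      then show "x \<oplus>\<^bsub>?H\<^esub> y \<oplus>\<^bsub>?H\<^esub> z = x \<oplus>\<^bsub>?H\<^esub> (y \<oplus>\<^bsub>?H\<^esub> z)"
        by (auto simp: hom_add fc N.a_assoc intro!: restrict_ext)
    next
      fix x y assume "x \<in> carrier ?H" "y \<in> carrier ?H"
      then show "x \<oplus>\<^bsub>?H\<^esub> y = y \<oplus>\<^bsub>?H\<^esub> x"
        by (auto simp: hom_add fc N.a_comm intro!: restrict_ext)
    next
      fix x assume x: "x \<in> carrier ?H"
      have "\<zero>\<^bsub>?H\<^esub> \<oplus>\<^bsub>?H\<^esub> x = (\<lambda>a\<in>carrier M. x a)"
        using x by (auto simp: hom_add hom_zero fc intro!: restrict_ext)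
      then show "\<zero>\<^bsub>?H\<^esub> \<oplus>\<^bsub>?H\<^esub> x = x" using fe[OF x] by simp
    next
      fix x assume x: "x \<in> carrier ?H"
      show "\<exists>y\<in>carrier ?H. y \<oplus>\<^bsub>?H\<^esub> x = \<zero>\<^bsub>?H\<^esub>"
      proof (intro bexI)
        show "(\<lambda>a\<in>carrier M. \<ominus>\<^bsub>N\<^esub> x a) \<in> carrier ?H" using c_neg x .
        show "(\<lambda>a\<in>carrier M. \<ominus>\<^bsub>N\<^esub> x a) \<oplus>\<^bsub>?H\<^esub> x = \<zero>\<^bsub>?H\<^esub>"
          using x by (auto simp: hom_add hom_zero fc N.l_neg intro!: restrict_ext)
      qed
    qed
  next
    fix a x assume "a \<in> carrier R" "x \<in> carrier ?H"
    then show "a \<odot>\<^bsub>?H\<^esub> x \<in> carrier ?H" using c_sm by (simp add: hom_smult)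
  next
    fix a b x assume "a \<in> carrier R" "b \<in> carrier R" "x \<in> carrier ?H"
    then show "(a \<oplus>\<^bsub>R\<^esub> b) \<odot>\<^bsub>?H\<^esub> x = a \<odot>\<^bsub>?H\<^esub> x \<oplus>\<^bsub>?H\<^esub> b \<odot>\<^bsub>?H\<^esub> x"
      by (auto simp: hom_add hom_smult fc N.smult_l_distr intro!: restrict_ext)
  next
    fix a x y assume "a \<in> carrier R" "x \<in> carrier ?H" "y \<in> carrier ?H"
    then show "a \<odot>\<^bsub>?H\<^esub> (x \<oplus>\<^bsub>?H\<^esub> y) = a \<odot>\<^bsub>?H\<^esub> x \<oplus>\<^bsub>?H\<^esub> a \<odot>\<^bsub>?H\<^esub> y"
      by (auto simp: hom_add hom_smult fc N.smult_r_distr intro!: restrict_ext)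
  next
    fix a b x assume "a \<in> carrier R" "b \<in> carrier R" "x \<in> carrier ?H"
    then show "(a \<otimes>\<^bsub>R\<^esub> b) \<odot>\<^bsub>?H\<^esub> x = a \<odot>\<^bsub>?H\<^esub> (b \<odot>\<^bsub>?H\<^esub> x)"
      by (auto simp: hom_smult fc N.smult_assoc1 intro!: restrict_ext)
  next
    fix x assume x: "x \<in> carrier ?H"
    have "\<one>\<^bsub>R\<^esub> \<odot>\<^bsub>?H\<^esub> x = (\<lambda>a\<in>carrier M. x a)"
      using x by (auto simp: hom_smult fc intro!: restrict_ext)
    then show "\<one>\<^bsub>R\<^esub> \<odot>\<^bsub>?H\<^esub> x = x" using fe[OF x] by simp
  qed
qed



lemma lin_neg:
  assumes "module R M" "module R N" "lin_map R M N f" "x \<in> carrier M"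
  shows "f (\<ominus>\<^bsub>M\<^esub> x) = \<ominus>\<^bsub>N\<^esub> f x"
proof -
  interpret M: module R M by fact
  interpret N: module R N by fact
  have "f (\<ominus>\<^bsub>M\<^esub> x) \<oplus>\<^bsub>N\<^esub> f x = f (\<ominus>\<^bsub>M\<^esub> x \<oplus>\<^bsub>M\<^esub> x)"
    using assms lin_add[of R M N f] by simp
  also have "\<dots> = \<zero>\<^bsub>N\<^esub>" using assms lin_zero[OF assms(1-3)] by (simp add: M.l_neg)
  finally show ?thesis using N.minus_equality[of "f (\<ominus>\<^bsub>M\<^esub> x)" "f x"] assms lin_closed[of R M N f]
    by simp
qed

lemma hom_zero_closed:
  assumes MM: "module R M" and EE: "module R E"
  shows "\<zero>\<^bsub>Hom_mod R M E\<^esub> \<in> carrier (Hom_mod R M E)"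
proof -
  interpret H: module R "Hom_mod R M E" using hom_module[OF MM EE] .
  show ?thesis by simp
qed

lemma hom_trivial:
  assumes MM: "module R M" and EE: "module R E" and c: "carrier M = {\<zero>\<^bsub>M\<^esub>}"
  shows "carrier (Hom_mod R M E) = {\<zero>\<^bsub>Hom_mod R M E\<^esub>}"
proof -
  interpret M: module R M by fact
  interpret E: module R E by fact
  have "f = \<zero>\<^bsub>Hom_mod R M E\<^esub>" if "f \<in> carrier (Hom_mod R M E)" for f
  proof -
    have "lin_map R M E f" "f \<in> extensional (carrier M)" using that hom_carrier by auto
    then show ?thesis unfolding hom_zero using lin_zero[OF MM EE] c
      by (intro extensionalityI[of _ "carrier M"]) auto
  qed
  moreover have "\<zero>\<^bsub>Hom_mod R M E\<^esub> \<in> carrier (Hom_mod R M E)"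
    using hom_zero_closed[OF MM EE] .
  ultimately show ?thesis by blast
qed

lemma image_submodule:
  assumes MM: "module R M" and f: "lin_map R M M f"
  shows "submodule (f ` carrier M) R M"
proof -
  interpret M: module R M by fact
  show ?thesis
  proof (rule M.submoduleI)
    show "f ` carrier M \<subseteq> carrier M" using lin_closed[OF f] by auto
    have "f \<zero>\<^bsub>M\<^esub> \<in> f ` carrier M" by (rule imageI) simp
    then show "\<zero>\<^bsub>M\<^esub> \<in> f ` carrier M" using lin_zero[OF MM MM f] by simp
  next
    fix a assume "a \<in> f ` carrier M"
    then obtain x where x: "x \<in> carrier M" "a = f x" by auto
    have "f (\<ominus>\<^bsub>M\<^esub> x) \<in> f ` carrier M" using x by (intro imageI) simp
    then show "\<ominus>\<^bsub>M\<^esub> a \<in> f ` carrier M" using lin_neg[OF MM MM f x(1)] x by simp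
  next
    fix a b assume "a \<in> f ` carrier M" "b \<in> f ` carrier M"
    then obtain x y where xy: "x \<in> carrier M" "a = f x" "y \<in> carrier M" "b = f y" by auto
    have "f (x \<oplus>\<^bsub>M\<^esub> y) \<in> f ` carrier M" using xy by (intro imageI) simp
    then show "a \<oplus>\<^bsub>M\<^esub> b \<in> f ` carrier M" using lin_add[OF f xy(1,3)] xy by simp
  next
    fix a x assume a: "a \<in> carrier R" and "x \<in> f ` carrier M"
    then obtain z where z: "z \<in> carrier M" "x = f z" by auto
    have "f (a \<odot>\<^bsub>M\<^esub> z) \<in> f ` carrier M" using z a by (intro imageI) simp
    then show "a \<odot>\<^bsub>M\<^esub> x \<in> f ` carrier M" using lin_smult[OF f a z(1)] z by simp
  qed
qed

lemma zero_submodule: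
  assumes MM: "module R M"
  shows "submodule {\<zero>\<^bsub>M\<^esub>} R M"
proof -
  interpret M: module R M by fact
  show ?thesis by (rule M.submoduleI) auto
qed

definition dualmap :: "('r, 'c) module \<Rightarrow> ('c \<Rightarrow> 'c) \<Rightarrow> ('c \<Rightarrow> 'e) \<Rightarrow> ('c \<Rightarrow> 'e)" where
  "dualmap M f g = (\<lambda>x\<in>carrier M. g (f x))"

lemma dualmap_lin:
  assumes MM: "module R M" and EE: "module R E" and f: "lin_map R M M f"
  shows "lin_map R (Hom_mod R M E) (Hom_mod R M E) (dualmap M f)"
proof (rule lin_mapI)
  interpret M: module R M by fact
  interpret E: module R E by fact
  fix g assume "g \<in> carrier (Hom_mod R M E)"
  then have g: "lin_map R M E g" using hom_carrier by auto
  have "lin_map R M E (\<lambda>x\<in>carrier M. g (f x))"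
    by (rule lin_mapI) (use f g in \<open>auto simp: lin_closed lin_add lin_smult\<close>)
  then show "dualmap M f g \<in> carrier (Hom_mod R M E)" unfolding dualmap_def hom_carrier by simp
next
  fix g h assume "g \<in> carrier (Hom_mod R M E)" "h \<in> carrier (Hom_mod R M E)"
  then show "dualmap M f (g \<oplus>\<^bsub>Hom_mod R M E\<^esub> h) = dualmap M f g \<oplus>\<^bsub>Hom_mod R M E\<^esub> dualmap M f h"
    unfolding dualmap_def hom_add using f lin_closed[OF f] by (auto intro!: restrict_ext)
next
  fix r g assume "r \<in> carrier R" "g \<in> carrier (Hom_mod R M E)"
  then show "dualmap M f (r \<odot>\<^bsub>Hom_mod R M E\<^esub> g) = r \<odot>\<^bsub>Hom_mod R M E\<^esub> dualmap M f g"
    unfolding dualmap_def hom_smult using f lin_closed[OF f] by (auto intro!: restrict_ext)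
qed

lemma sep_hom:
  fixes R :: "'r ring" and E :: "('r, 'e) module" and M :: "('r, 'c) module"
  assumes nl: "noeth_local_ring R m" and ess: "essential_ext_of_residue R m E"
    and inj: "injective_wrt TYPE('c) R E" and Mm: "module R M"
    and S: "submodule S R M" and y: "y \<in> carrier M" "y \<notin> S"
  shows "\<exists>g\<in>carrier (Hom_mod R M E). (\<forall>x\<in>S. g x = \<zero>\<^bsub>E\<^esub>) \<and> g y \<noteq> \<zero>\<^bsub>E\<^esub>"
proof -
  obtain g where g: "lin_map R M E g" "\<forall>x\<in>S. g x = \<zero>\<^bsub>E\<^esub>" "g y \<noteq> \<zero>\<^bsub>E\<^esub>"
    using separate[OF assms] by blast
  have Ssub: "S \<subseteq> carrier M" using module.submoduleE(1)[OF Mm S] .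
  interpret M: module R M by fact
  have "lin_map R M E (restrict g (carrier M))" using g(1) unfolding lin_map_def
    by auto
  then have "restrict g (carrier M) \<in> carrier (Hom_mod R M E)" by (simp add: hom_carrier)
  then show ?thesis using g y Ssub by (intro bexI[of _ "restrict g (carrier M)"]) auto
qed

lemma dual_nonzero:
  fixes R :: "'r ring" and E :: "('r, 'e) module" and M :: "('r, 'c) module"
  assumes nl: "noeth_local_ring R m" and ess: "essential_ext_of_residue R m E"
    and inj: "injective_wrt TYPE('c) R E" and Mm: "module R M"
    and f: "lin_map R M M f" and x0: "x0 \<in> carrier M" "f x0 \<noteq> \<zero>\<^bsub>M\<^esub>"
  shows "\<exists>g\<in>carrier (Hom_mod R M E). dualmap M f g \<noteq> \<zero>\<^bsub>Hom_mod R M E\<^esub>"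
proof -
  have "f x0 \<in> carrier M" using lin_closed[OF f x0(1)] .
  then obtain g where g: "g \<in> carrier (Hom_mod R M E)" "g (f x0) \<noteq> \<zero>\<^bsub>E\<^esub>"
    using sep_hom[OF nl ess inj Mm zero_submodule[OF Mm]] x0 by blast
  have "dualmap M f g x0 \<noteq> \<zero>\<^bsub>Hom_mod R M E\<^esub> x0" using g x0 by (simp add: dualmap_def hom_zero)
  then show ?thesis using g by metis
qed

lemma part_a:
  fixes R :: "'r ring" and E :: "('r, 'e) module" and M :: "('r, 'c) module"
  assumes nl: "noeth_local_ring R m" and ess: "essential_ext_of_residue R m E"
    and inj: "injective_wrt TYPE('c) R E" and Mm: "module R M"
    and sp: "strongly_prime R (Hom_mod R M E)"
  shows "strongly_coprime R M"
proof -
  have EE: "module R E" using ess unfolding essential_ext_of_residue_def by auto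
  interpret M: module R M by fact
  interpret E: module R E by fact
  let ?H = "Hom_mod R M E"
  have ne: "carrier M \<noteq> {\<zero>\<^bsub>M\<^esub>}"
  proof
    assume "carrier M = {\<zero>\<^bsub>M\<^esub>}"
    then have "carrier ?H = {\<zero>\<^bsub>?H\<^esub>}" by (rule hom_trivial[OF Mm EE])
    then show False using sp unfolding strongly_prime_def by simp
  qed
  have spf: "\<And>\<phi>. lin_map R ?H ?H \<phi> \<Longrightarrow> (\<exists>x\<in>carrier ?H. \<phi> x \<noteq> \<zero>\<^bsub>?H\<^esub>) \<Longrightarrow> inj_on \<phi> (carrier ?H)"
    using sp unfolding strongly_prime_def by blast
  have "f ` carrier M = carrier M" if f: "lin_map R M M f" and x0: "x0 \<in> carrier M" "f x0 \<noteq> \<zero>\<^bsub>M\<^esub>" for f x0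
  proof (rule ccontr)
    have sub: "f ` carrier M \<subseteq> carrier M" using lin_closed[OF f] by auto
    assume "f ` carrier M \<noteq> carrier M"
    then obtain y where y: "y \<in> carrier M" "y \<notin> f ` carrier M" using sub by blast
    obtain g where g: "g \<in> carrier ?H" "\<forall>x\<in>f ` carrier M. g x = \<zero>\<^bsub>E\<^esub>" "g y \<noteq> \<zero>\<^bsub>E\<^esub>"
      using sep_hom[OF nl ess inj Mm image_submodule[OF Mm f] y] by blast
    have injd: "inj_on (dualmap M f) (carrier ?H)"
      by (rule spf[OF dualmap_lin[OF Mm EE f] dual_nonzero[OF nl ess inj Mm f x0]])
    have z: "\<zero>\<^bsub>?H\<^esub> \<in> carrier ?H"
      using hom_zero_closed[OF Mm EE] .
    have "dualmap M f g = dualmap M f \<zero>\<^bsub>?H\<^esub>"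
      unfolding dualmap_def hom_zero using g(2) lin_closed[OF f] by (auto intro!: restrict_ext)
    then have "g = \<zero>\<^bsub>?H\<^esub>" using inj_onD[OF injd _ g(1) z] by blast
    then show False using g(3) y by (simp add: hom_zero)
  qed
  then show ?thesis using ne unfolding strongly_coprime_def by blast
qed

lemma part_b:
  fixes R :: "'r ring" and E :: "('r, 'e) module" and M :: "('r, 'c) module"
  assumes nl: "noeth_local_ring R m" and ess: "essential_ext_of_residue R m E"
    and inj: "injective_wrt TYPE('c) R E" and Mm: "module R M"
    and sc: "strongly_coprime R (Hom_mod R M E)"
  shows "strongly_prime R M"
proof -
  have EE: "module R E" using ess unfolding essential_ext_of_residue_def by auto
  interpret M: module R M by fact
  interpret E: module R E by fact
  let ?H = "Hom_mod R M E"
  have ne: "carrier M \<noteq> {\<zero>\<^bsub>M\<^esub>}"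
  proof
    assume "carrier M = {\<zero>\<^bsub>M\<^esub>}"
    then have "carrier ?H = {\<zero>\<^bsub>?H\<^esub>}" by (rule hom_trivial[OF Mm EE])
    then show False using sc unfolding strongly_coprime_def by simp
  qed
  have scf: "\<And>\<phi>. lin_map R ?H ?H \<phi> \<Longrightarrow> (\<exists>x\<in>carrier ?H. \<phi> x \<noteq> \<zero>\<^bsub>?H\<^esub>) \<Longrightarrow> \<phi> ` carrier ?H = carrier ?H"
    using sc unfolding strongly_coprime_def by blast
  have "inj_on f (carrier M)" if f: "lin_map R M M f" and x0: "x0 \<in> carrier M" "f x0 \<noteq> \<zero>\<^bsub>M\<^esub>" for f x0
  proof (rule inj_onI, rule ccontr)
    fix x x' assume xx: "x \<in> carrier M" "x' \<in> carrier M" "f x = f x'" "x \<noteq> x'"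
    define d where "d = x \<oplus>\<^bsub>M\<^esub> \<ominus>\<^bsub>M\<^esub> x'"
    have dc: "d \<in> carrier M" using xx d_def by simp
    have "d \<noteq> \<zero>\<^bsub>M\<^esub>"
    proof
      assume "d = \<zero>\<^bsub>M\<^esub>"
      then have "\<ominus>\<^bsub>M\<^esub> (\<ominus>\<^bsub>M\<^esub> x') = x" using M.minus_equality[of x "\<ominus>\<^bsub>M\<^esub> x'"] xx d_def by simp
      then show False using xx by simp
    qed
    then obtain g where g: "g \<in> carrier ?H" "g d \<noteq> \<zero>\<^bsub>E\<^esub>"
      using sep_hom[OF nl ess inj Mm zero_submodule[OF Mm]] dc by blast
    have fd: "f d = \<zero>\<^bsub>M\<^esub>" unfolding d_def
      using lin_add[OF f] lin_neg[OF Mm Mm f] xx lin_closed[OF f] by (simp add: M.r_neg)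
    have "dualmap M f ` carrier ?H = carrier ?H"
      by (rule scf[OF dualmap_lin[OF Mm EE f] dual_nonzero[OF nl ess inj Mm f x0]])
    then obtain h where h: "h \<in> carrier ?H" "g = dualmap M f h" using g(1) by (metis (no_types, lifting) imageE)
    have hl: "lin_map R M E h" using h hom_carrier by auto
    have "g d = h (f d)" using h dc by (simp add: dualmap_def)
    also have "\<dots> = \<zero>\<^bsub>E\<^esub>" using fd lin_zero[OF Mm EE hl] by simp
    finally show False using g by simp
  qed
  then show ?thesis using ne unfolding strongly_prime_def by blast
qed



lemma transport:
  assumes MM: "module R M" and NN: "module R N" and ph: "lin_map R M N \<phi>"
    and bij: "bij_betw \<phi> (carrier M) (carrier N)"
  shows "strongly_coprime R M \<Longrightarrow> strongly_coprime R N"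
    and "strongly_prime R M \<Longrightarrow> strongly_prime R N"
proof -
  interpret M: module R M by fact
  interpret N: module R N by fact
  define \<psi> where "\<psi> = inv_into (carrier M) \<phi>"
  have injp: "inj_on \<phi> (carrier M)" and imp: "\<phi> ` carrier M = carrier N" using bij unfolding bij_betw_def by auto
  have \<psi>c: "\<psi> w \<in> carrier M" if "w \<in> carrier N" for w
    using that imp unfolding \<psi>_def by (intro inv_into_into) simp
  have \<phi>\<psi>: "\<phi> (\<psi> w) = w" if "w \<in> carrier N" for w
    using that imp unfolding \<psi>_def by (intro f_inv_into_f) simp
  have \<psi>\<phi>: "\<psi> (\<phi> x) = x" if "x \<in> carrier M" for x
    using that injp unfolding \<psi>_def by (simp add: inv_into_f_f)
  have \<phi>c: "\<phi> x \<in> carrier N" if "x \<in> carrier M" for x using lin_closed[OF ph that] .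
  have \<psi>add: "\<psi> (a \<oplus>\<^bsub>N\<^esub> b) = \<psi> a \<oplus>\<^bsub>M\<^esub> \<psi> b" if "a \<in> carrier N" "b \<in> carrier N" for a b
  proof -
    have "\<psi> (a \<oplus>\<^bsub>N\<^esub> b) = \<psi> (\<phi> (\<psi> a) \<oplus>\<^bsub>N\<^esub> \<phi> (\<psi> b))" using that \<phi>\<psi> by simp
    also have "\<dots> = \<psi> (\<phi> (\<psi> a \<oplus>\<^bsub>M\<^esub> \<psi> b))" using lin_add[OF ph] \<psi>c that by simp
    finally show ?thesis using \<psi>\<phi> \<psi>c that by simp
  qed
  have \<psi>sm: "\<psi> (r \<odot>\<^bsub>N\<^esub> a) = r \<odot>\<^bsub>M\<^esub> \<psi> a" if "r \<in> carrier R" "a \<in> carrier N" for r a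
  proof -
    have "\<psi> (r \<odot>\<^bsub>N\<^esub> a) = \<psi> (r \<odot>\<^bsub>N\<^esub> \<phi> (\<psi> a))" using that \<phi>\<psi> by simp
    also have "\<dots> = \<psi> (\<phi> (r \<odot>\<^bsub>M\<^esub> \<psi> a))" using lin_smult[OF ph] \<psi>c that by simp
    finally show ?thesis using \<psi>\<phi> \<psi>c that by simp
  qed
  have \<phi>0: "\<phi> \<zero>\<^bsub>M\<^esub> = \<zero>\<^bsub>N\<^esub>" by (rule lin_zero[OF MM NN ph])
  have \<psi>0: "\<psi> \<zero>\<^bsub>N\<^esub> = \<zero>\<^bsub>M\<^esub>" using \<psi>\<phi>[of "\<zero>\<^bsub>M\<^esub>"] \<phi>0 by simp
  have ne: "carrier N \<noteq> {\<zero>\<^bsub>N\<^esub>}" if "carrier M \<noteq> {\<zero>\<^bsub>M\<^esub>}"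
  proof
    assume N0: "carrier N = {\<zero>\<^bsub>N\<^esub>}"
    have "\<exists>x\<in>carrier M. x \<noteq> \<zero>\<^bsub>M\<^esub>"
    proof (rule ccontr)
      assume "\<not> (\<exists>x\<in>carrier M. x \<noteq> \<zero>\<^bsub>M\<^esub>)"
      then have "carrier M \<subseteq> {\<zero>\<^bsub>M\<^esub>}" by auto
      then have "carrier M = {\<zero>\<^bsub>M\<^esub>}" using M.zero_closed by auto
      then show False using that by simp
    qed
    then obtain x where x: "x \<in> carrier M" "x \<noteq> \<zero>\<^bsub>M\<^esub>" by auto
    have "\<phi> x \<in> {\<zero>\<^bsub>N\<^esub>}" using \<phi>c[OF x(1)] N0 by simp
    then have "\<phi> x = \<zero>\<^bsub>N\<^esub>" by simp
    then have "x = \<zero>\<^bsub>M\<^esub>" using \<psi>\<phi>[OF x(1)] \<psi>0 by simp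
    then show False using x by simp
  qed
  define F where "F f' = (\<lambda>x. \<psi> (f' (\<phi> x)))" for f'
  have Flin: "lin_map R M M (F f')" if f': "lin_map R N N f'" for f'
  proof (rule lin_mapI)
    fix x assume "x \<in> carrier M" then show "F f' x \<in> carrier M"
      unfolding F_def using \<psi>c[OF lin_closed[OF f' \<phi>c[OF \<open>x \<in> carrier M\<close>]]] by simp
  next
    fix x y assume xy: "x \<in> carrier M" "y \<in> carrier M"
    have "F f' (x \<oplus>\<^bsub>M\<^esub> y) = \<psi> (f' (\<phi> x \<oplus>\<^bsub>N\<^esub> \<phi> y))" unfolding F_def using lin_add[OF ph xy] by simp
    also have "\<dots> = \<psi> (f' (\<phi> x) \<oplus>\<^bsub>N\<^esub> f' (\<phi> y))" using lin_add[OF f' \<phi>c[OF xy(1)] \<phi>c[OF xy(2)]] by simp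
    also have "\<dots> = F f' x \<oplus>\<^bsub>M\<^esub> F f' y" unfolding F_def
      by (rule \<psi>add[OF lin_closed[OF f' \<phi>c[OF xy(1)]] lin_closed[OF f' \<phi>c[OF xy(2)]]])
    finally show "F f' (x \<oplus>\<^bsub>M\<^esub> y) = F f' x \<oplus>\<^bsub>M\<^esub> F f' y" .
  next
    fix r x assume rx: "r \<in> carrier R" "x \<in> carrier M"
    have "F f' (r \<odot>\<^bsub>M\<^esub> x) = \<psi> (f' (r \<odot>\<^bsub>N\<^esub> \<phi> x))" unfolding F_def using lin_smult[OF ph rx] by simp
    also have "\<dots> = \<psi> (r \<odot>\<^bsub>N\<^esub> f' (\<phi> x))" using lin_smult[OF f' rx(1) \<phi>c[OF rx(2)]] by simp
    also have "\<dots> = r \<odot>\<^bsub>M\<^esub> F f' x" unfolding F_def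
      by (rule \<psi>sm[OF rx(1) lin_closed[OF f' \<phi>c[OF rx(2)]]])
    finally show "F f' (r \<odot>\<^bsub>M\<^esub> x) = r \<odot>\<^bsub>M\<^esub> F f' x" .
  qed
  have Fnz: "\<exists>x\<in>carrier M. F f' x \<noteq> \<zero>\<^bsub>M\<^esub>"
    if f': "lin_map R N N f'" and x': "x' \<in> carrier N" "f' x' \<noteq> \<zero>\<^bsub>N\<^esub>" for f' x'
  proof (intro bexI)
    show "\<psi> x' \<in> carrier M" using \<psi>c[OF x'(1)] .
    show "F f' (\<psi> x') \<noteq> \<zero>\<^bsub>M\<^esub>"
    proof
      assume "F f' (\<psi> x') = \<zero>\<^bsub>M\<^esub>"
      then have "\<psi> (f' x') = \<zero>\<^bsub>M\<^esub>" unfolding F_def using \<phi>\<psi>[OF x'(1)] by simp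
      then have "\<phi> (\<psi> (f' x')) = \<zero>\<^bsub>N\<^esub>" using \<phi>0 by simp
      then show False using \<phi>\<psi>[OF lin_closed[OF f' x'(1)]] x'(2) by simp
    qed
  qed
  show "strongly_coprime R N" if sc: "strongly_coprime R M"
  proof -
    have scf: "\<And>f. lin_map R M M f \<Longrightarrow> (\<exists>x\<in>carrier M. f x \<noteq> \<zero>\<^bsub>M\<^esub>) \<Longrightarrow> f ` carrier M = carrier M"
      using sc unfolding strongly_coprime_def by blast
    have "f' ` carrier N = carrier N" if f': "lin_map R N N f'" and x': "x' \<in> carrier N" "f' x' \<noteq> \<zero>\<^bsub>N\<^esub>" for f' x'
    proof
      show "f' ` carrier N \<subseteq> carrier N" using lin_closed[OF f'] by auto
      show "carrier N \<subseteq> f' ` carrier N"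
      proof
        fix w assume w: "w \<in> carrier N"
        have "\<psi> w \<in> F f' ` carrier M" using scf[OF Flin[OF f'] Fnz[OF f' x']] \<psi>c[OF w] by simp
        then obtain x where x: "x \<in> carrier M" "\<psi> w = \<psi> (f' (\<phi> x))" unfolding F_def by auto
        have "w = \<phi> (\<psi> w)" using \<phi>\<psi>[OF w] by simp
        also have "\<dots> = \<phi> (\<psi> (f' (\<phi> x)))" using x(2) by simp
        also have "\<dots> = f' (\<phi> x)" using \<phi>\<psi>[OF lin_closed[OF f' \<phi>c[OF x(1)]]] by simp
        finally have "w = f' (\<phi> x)" .
        then show "w \<in> f' ` carrier N" using \<phi>c[OF x(1)] by simp
      qed
    qed
    moreover have "carrier M \<noteq> {\<zero>\<^bsub>M\<^esub>}" using sc unfolding strongly_coprime_def by simp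
    ultimately show ?thesis using ne unfolding strongly_coprime_def by blast
  qed
  show "strongly_prime R N" if sp: "strongly_prime R M"
  proof -
    have spf: "\<And>f. lin_map R M M f \<Longrightarrow> (\<exists>x\<in>carrier M. f x \<noteq> \<zero>\<^bsub>M\<^esub>) \<Longrightarrow> inj_on f (carrier M)"
      using sp unfolding strongly_prime_def by blast
    have "inj_on f' (carrier N)" if f': "lin_map R N N f'" and x': "x' \<in> carrier N" "f' x' \<noteq> \<zero>\<^bsub>N\<^esub>" for f' x'
    proof (rule inj_onI)
      fix a b assume ab: "a \<in> carrier N" "b \<in> carrier N" "f' a = f' b"
      have injF: "inj_on (F f') (carrier M)" by (rule spf[OF Flin[OF f'] Fnz[OF f' x']])
      have "F f' (\<psi> a) = F f' (\<psi> b)" unfolding F_def using ab \<phi>\<psi> by simp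
      then have "\<psi> a = \<psi> b" using inj_onD[OF injF _ \<psi>c[OF ab(1)] \<psi>c[OF ab(2)]] by blast
      then have "\<phi> (\<psi> a) = \<phi> (\<psi> b)" by simp
      then show "a = b" using \<phi>\<psi>[OF ab(1)] \<phi>\<psi>[OF ab(2)] by simp
    qed
    moreover have "carrier M \<noteq> {\<zero>\<^bsub>M\<^esub>}" using sp unfolding strongly_prime_def by simp
    ultimately show ?thesis using ne unfolding strongly_prime_def by blast
  qed
qed

theorem lemma2p2:
  fixes R :: "'r ring" and m :: "'r set"
    and E :: "('r, 'e) module" and N :: "('r, 'n) module"
  assumes "noeth_local_ring R m"
    and "essential_ext_of_residue R m E"
    and "injective_wrt TYPE('n) R E"
    and "injective_wrt TYPE('n \<Rightarrow> 'e) R E"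
    and "module R N"
  shows "(strongly_prime R (Hom_mod R N E) \<longrightarrow> strongly_coprime R N)
       \<and> (strongly_coprime R (Hom_mod R N E) \<longrightarrow> strongly_prime R N)
       \<and> (reflexive_wrt R E N \<longrightarrow>
            (strongly_coprime R N \<longrightarrow> strongly_prime R (Hom_mod R N E))
          \<and> (strongly_prime R N \<longrightarrow> strongly_coprime R (Hom_mod R N E)))"
proof -
  note nl = assms(1) and ess = assms(2) and inj1 = assms(3) and inj2 = assms(4) and NN = assms(5)
  have EE: "module R E" using ess unfolding essential_ext_of_residue_def by auto
  have HM: "module R (Hom_mod R N E)" by (rule hom_module[OF NN EE])
  have HHM: "module R (Hom_mod R (Hom_mod R N E) E)" by (rule hom_module[OF HM EE])
  have A: "strongly_prime R (Hom_mod R N E) \<longrightarrow> strongly_coprime R N"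
    using part_a[OF nl ess inj1 NN] by blast
  have B: "strongly_coprime R (Hom_mod R N E) \<longrightarrow> strongly_prime R N"
    using part_b[OF nl ess inj1 NN] by blast
  have C: "(strongly_coprime R N \<longrightarrow> strongly_prime R (Hom_mod R N E))
          \<and> (strongly_prime R N \<longrightarrow> strongly_coprime R (Hom_mod R N E))" if rf: "reflexive_wrt R E N"
  proof -
    have l: "lin_map R N (Hom_mod R (Hom_mod R N E) E) (eval_map R E N)"
      and b: "bij_betw (eval_map R E N) (carrier N) (carrier (Hom_mod R (Hom_mod R N E) E))"
      using rf unfolding reflexive_wrt_def by auto
    show ?thesis
    proof (intro conjI impI)
      assume "strongly_coprime R N"
      then have "strongly_coprime R (Hom_mod R (Hom_mod R N E) E)" by (rule transport(1)[OF NN HHM l b])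
      then show "strongly_prime R (Hom_mod R N E)" by (rule part_b[OF nl ess inj2 HM])
    next
      assume "strongly_prime R N"
      then have "strongly_prime R (Hom_mod R (Hom_mod R N E) E)" by (rule transport(2)[OF NN HHM l b])
      then show "strongly_coprime R (Hom_mod R N E)" by (rule part_a[OF nl ess inj2 HM])
    qed
  qed
  show ?thesis using A B C by blast
qed


end
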